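(* Let $\lambda_1,\lambda_2>2$, $0<\alpha\le n(\lambda_1-2)/2$, $0<\beta\le m(\lambda_2-2)/2$, and let $K_{t_1,t_2}$ satisfy Assumption 1. Let $I_1,I_2\in\mathcal D_n$ and $J_1,J_2\in\mathcal D_m$ with $\ell(I_1)<\ell(I_2)$ and $\ell(J_1)<\ell(J_2)$, let $h_{I_1},h_{J_1}$ be cancellative Haar functions, and let $(x_1,t_1)\in W_{I_2}$, $(x_2,t_2)\in W_{J_2}$. Then $$\Big(\iint_{\mathbb{R}^{n+m}}|\theta_{t_1,t_2}(h_{I_1}\otimes h_{J_1})(x-y)|^2\Big(\tfrac{t_1}{t_1+|y_1|}\Big)^{n\lambda_1}\Big(\tfrac{t_2}{t_2+|y_2|}\Big)^{m\lambda_2}\frac{dy_1dy_2}{t_1^nt_2^m}\Big)^{1/2}\lesssim \frac{\ell(I_1)^\alpha|I_1|^{1/2}}{(\ell(I_2)+d(I_1,I_2))^{n+\alpha}}\cdot\frac{\ell(J_1)^\beta|J_1|^{1/2}}{(\ell(J_2)+d(J_1,J_2))^{m+\beta}},$$ and consequently this quantity is $\lesssim A_{I_1I_2}|I_2|^{-1/2}\,A_{J_1J_2}|J_2|^{-1/2}$.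
   Context: $\ell^\infty$ norms on $\mathbb{R}^n,\mathbb{R}^m$; $x=(x_1,x_2)$, $y=(y_1,y_2)$. $\theta_{t_1,t_2}f(w)=\iint K_{t_1,t_2}(w,z)f(z)\,dz$ and $\theta_{t_1,t_2}f(x-y)$ means this function evaluated at $(x_1-y_1,x_2-y_2)$. Assumption 1: (1) $|K_{t_1,t_2}(x,y)|\lesssim \frac{t_1^\alpha}{(t_1+|x_1-y_1|)^{n+\alpha}}\frac{t_2^\beta}{(t_2+|x_2-y_2|)^{m+\beta}}$; (2) $|K_{t_1,t_2}(x,y)-K_{t_1,t_2}(x,(y_1,y_2'))-K_{t_1,t_2}(x,(y_1',y_2))+K_{t_1,t_2}(x,y')|\lesssim \frac{|y_1-y_1'|^\alpha}{(t_1+|x_1-y_1|)^{n+\alpha}}\frac{|y_2-y_2'|^\beta}{(t_2+|x_2-y_2|)^{m+\beta}}$ whenever $|y_1-y_1'|<t_1/2$, $|y_2-y_2'|<t_2/2$; (3) $|K_{t_1,t_2}(x,y)-K_{t_1,t_2}(x,(y_1,y_2'))|\lesssim \frac{t_1^\alpha}{(t_1+|x_1-y_1|)^{n+\alpha}}\frac{|y_2-y_2'|^\beta}{(t_2+|x_2-y_2|)^{m+\beta}}$ whenever $|y_2-y_2'|<t_2/2$, and the symmetric estimate in the first variable whenever $|y_1-y_1'|<t_1/2$. $\mathcal D_n,\mathcal D_m$ are dyadic grids; $W_I=I\times(\ell(I)/2,\ell(I))$; $d(\cdot,\cdot)$ is the distance between cubes. A cancellative Haar function $h_I$ on a dyadic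 cube $I=I_1\times\cdots\times I_n$ is $h_{I_1}^{\eta_1}\otimes\cdots\otimes h_{I_n}^{\eta_n}$ with $\eta\in\{0,1\}^n\setminus\{0\}$, $h^0_{I_i}=|I_i|^{-1/2}\mathbf 1_{I_i}$, $h^1_{I_i}=|I_i|^{-1/2}(\mathbf 1_{I_{i,l}}-\mathbf 1_{I_{i,r}})$ (left/right halves). $A_{I_1I_2}=\frac{\ell(I_1)^{\alpha/2}\ell(I_2)^{\alpha/2}}{D(I_1,I_2)^{n+\alpha}}|I_1|^{1/2}|I_2|^{1/2}$ with $D(I_1,I_2)=\ell(I_1)+\ell(I_2)+d(I_1,I_2)$, and analogously $A_{J_1J_2}$ with $m,\beta$. *)

theory Defs
  imports "HOL-Analysis.Analysis"
begin

definition linf :: "real^('n::finite) \<Rightarrow> real" where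
  "linf x = Max (range (\<lambda>i. \<bar>x $ i\<bar>))"

definition dside :: "int \<Rightarrow> real" where
  "dside k = 2 powr (- real_of_int k)"

definition dcube :: "int \<Rightarrow> ('n::finite \<Rightarrow> int) \<Rightarrow> (real^'n) set" where
  "dcube k j = {x. \<forall>i. real_of_int (j i) * dside k \<le> x $ i \<and> x $ i < (real_of_int (j i) + 1) * dside k}"

definition cdist :: "(real^('n::finite)) set \<Rightarrow> (real^'n) set \<Rightarrow> real" where
  "cdist A B = Inf {linf (x - y) | x y. x \<in> A \<and> y \<in> B}"

definition haar1 :: "real \<Rightarrow> real \<Rightarrow> bool \<Rightarrow> real \<Rightarrow> real" where
  "haar1 a l e s = (if e
     then (indicator {a..<a + l/2} s - indicator {a + l/2..<a + l} s) / sqrt l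
     else indicator {a..<a + l} s / sqrt l)"

text \<open>Haar function h_I^eta on the dyadic cube dcube k j (cancellative iff eta is not identically False).\<close>
definition haar :: "int \<Rightarrow> ('n::finite \<Rightarrow> int) \<Rightarrow> ('n \<Rightarrow> bool) \<Rightarrow> real^'n \<Rightarrow> real" where
  "haar k j eta x = (\<Prod>i\<in>UNIV. haar1 (real_of_int (j i) * dside k) (dside k) (eta i) (x $ i))"

type_synonym ('n, 'm) kernel =
  "real \<Rightarrow> real \<Rightarrow> ((real^'n) \<times> (real^'m)) \<Rightarrow> ((real^'n) \<times> (real^'m)) \<Rightarrow> real"

definition assumption1 :: "real \<Rightarrow> real \<Rightarrow> real \<Rightarrow> ('n::finite, 'm::finite) kernel \<Rightarrow> bool" where
  "assumption1 C \<alpha> \<beta> K \<longleftrightarrow>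
    (\<forall>t1 t2 x1 x2 y1 y2 y1' y2'. t1 > 0 \<longrightarrow> t2 > 0 \<longrightarrow>
      (\<bar>K t1 t2 (x1, x2) (y1, y2)\<bar>
         \<le> C * (t1 powr \<alpha> / (t1 + linf (x1 - y1)) powr (real CARD('n) + \<alpha>))
              * (t2 powr \<beta> / (t2 + linf (x2 - y2)) powr (real CARD('m) + \<beta>))) \<and>
      (linf (y1 - y1') < t1 / 2 \<longrightarrow> linf (y2 - y2') < t2 / 2 \<longrightarrow>
        \<bar>K t1 t2 (x1, x2) (y1, y2) - K t1 t2 (x1, x2) (y1, y2')
          - K t1 t2 (x1, x2) (y1', y2) + K t1 t2 (x1, x2) (y1', y2')\<bar>
         \<le> C * (linf (y1 - y1') powr \<alpha> / (t1 + linf (x1 - y1)) powr (real CARD('n) + \<alpha>))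
              * (linf (y2 - y2') powr \<beta> / (t2 + linf (x2 - y2)) powr (real CARD('m) + \<beta>))) \<and>
      (linf (y2 - y2') < t2 / 2 \<longrightarrow>
        \<bar>K t1 t2 (x1, x2) (y1, y2) - K t1 t2 (x1, x2) (y1, y2')\<bar>
         \<le> C * (t1 powr \<alpha> / (t1 + linf (x1 - y1)) powr (real CARD('n) + \<alpha>))
              * (linf (y2 - y2') powr \<beta> / (t2 + linf (x2 - y2)) powr (real CARD('m) + \<beta>))) \<and>
      (linf (y1 - y1') < t1 / 2 \<longrightarrow>
        \<bar>K t1 t2 (x1, x2) (y1, y2) - K t1 t2 (x1, x2) (y1', y2)\<bar>
         \<le> C * (linf (y1 - y1') powr \<alpha> / (t1 + linf (x1 - y1)) powr (real CARD('n) + \<alpha>))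
              * (t2 powr \<beta> / (t2 + linf (x2 - y2)) powr (real CARD('m) + \<beta>))))"

definition theta :: "('n::finite, 'm::finite) kernel \<Rightarrow> real \<Rightarrow> real \<Rightarrow>
    ((real^'n) \<times> (real^'m) \<Rightarrow> real) \<Rightarrow> (real^'n) \<times> (real^'m) \<Rightarrow> real" where
  "theta K t1 t2 f w = (LINT z|lborel. K t1 t2 w z * f z)"

text \<open>The square of the left-hand side quantity (as an extended nonnegative real).\<close>
definition lhs_sq :: "('n::finite, 'm::finite) kernel \<Rightarrow> real \<Rightarrow> real \<Rightarrow>
    ((real^'n) \<times> (real^'m) \<Rightarrow> real) \<Rightarrow> real^'n \<Rightarrow> real^'m \<Rightarrow> real \<Rightarrow> real \<Rightarrow> ennreal" where
  "lhs_sq K lam1 lam2 f x1 x2 t1 t2 =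
    (\<integral>\<^sup>+ y. ennreal (\<bar>theta K t1 t2 f (x1 - fst y, x2 - snd y)\<bar>\<^sup>2
        * (t1 / (t1 + linf (fst y))) powr (real CARD('n) * lam1)
        * (t2 / (t2 + linf (snd y))) powr (real CARD('m) * lam2)
        / (t1 ^ CARD('n) * t2 ^ CARD('m))) \<partial>lborel)"

end

theory Submission imports Defs begin

lemma linf_infnorm: "linf (x::real^'n::finite) = infnorm x"
proof -
  have "{\<bar>x$i\<bar> |i. i\<in>UNIV} = range (\<lambda>i. \<bar>x$i\<bar>)" by auto
  then show ?thesis unfolding linf_def infnorm_cart by (simp add: cSup_eq_Max)
qed

lemma linf_nonneg: "0 \<le> linf x" by (simp add: linf_infnorm infnorm_pos_le)
lemma linf_triangle: "linf (x + y) \<le> linf x + linf y" by (simp add: linf_infnorm infnorm_triangle)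
lemma linf_sub: "linf (x - y) = linf (y - x)" by (simp add: linf_infnorm infnorm_sub)
lemma linf_less_iff: "linf (x::real^'n::finite) < r \<longleftrightarrow> (\<forall>i. \<bar>x$i\<bar> < r)"
  unfolding linf_def by (simp add: Max_less_iff)
lemma linf_le_iff: "linf (x::real^'n::finite) \<le> r \<longleftrightarrow> (\<forall>i. \<bar>x$i\<bar> \<le> r)"
  unfolding linf_def by (simp add: Max_le_iff)
lemma linf_meas[measurable]: "linf \<in> borel_measurable (borel :: (real^'n::finite) measure)"
  unfolding linf_infnorm[abs_def] by (intro borel_measurable_continuous_onI continuous_intros)


lemma dyadic_pt:
  fixes s t r :: real
  assumes t: "t > 0" and s: "s \<ge> 0" and r: "r > 0"
  shows "ennreal ((t/(t+s)) powr r) \<le> (\<Sum>k. ennreal ((2 / 2^k) powr r) * indicator {..<2^k*t} s)"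
proof -
  have "\<exists>k. s / t < 2^k" using real_arch_pow[of 2 "s/t"] by auto
  then have ex: "\<exists>k::nat. s < 2^k * t" using t by (simp add: divide_less_eq)
  define k where "k = (LEAST k::nat. s < 2^k * t)"
  have k1: "s < 2^k * t" unfolding k_def by (rule LeastI_ex[OF ex])
  have k2: "k > 0 \<Longrightarrow> 2^(k-1) * t \<le> s"
    using not_less_Least[of "k-1" "\<lambda>k. s < 2^k * t"] unfolding k_def[symmetric] by force
  have le: "(t/(t+s)) powr r \<le> (2 / 2^k) powr r"
  proof (cases "k = 0")
    case True
    have "t/(t+s) \<le> 1" using t s by simp
    then have "(t/(t+s)) powr r \<le> 1 powr r" using t s r by (intro powr_mono2) auto
    also have "\<dots> \<le> 2 powr r" using r by (simp add: ge_one_powr_ge_zero)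
    finally show ?thesis using True by simp
  next
    case False
    then have "2^(k-1) * t \<le> s" using k2 by simp
    then have "2^(k-1) * t \<le> t + s" using t by linarith
    then have "t/(t+s) \<le> t / (2^(k-1)*t)" using t s by (intro divide_left_mono) auto
    also have "\<dots> = 2 / 2^k" using t False by (cases k) auto
    finally show ?thesis using t s r by (intro powr_mono2) auto
  qed
  have "ennreal ((t/(t+s)) powr r) \<le> ennreal ((2 / 2^k) powr r) * indicator {..<2^k*t} s"
    using le k1 by (simp add: ennreal_leI)
  also have "\<dots> \<le> (\<Sum>k. ennreal ((2 / 2^k) powr r) * indicator {..<2^k*t} s)"
    by (meson ennreal_suminf_lessD not_le order_less_irrefl)
  finally show ?thesis .
qed

lemma emeasure_linf_ball:
  fixes v :: "real^'n::finite"
  assumes R: "R \<ge> 0"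
  shows "emeasure lborel {y. linf (y - v) < R} = ennreal ((2*R)^CARD('n))"
proof -
  define a where "a = (\<chi> i. v$i - R)"
  define b where "b = (\<chi> i. v$i + R)"
  have eq: "{y. linf (y - v) < R} = box a b"
    apply (auto simp: linf_less_iff mem_box_cart a_def b_def abs_less_iff)
    by (drule_tac x=i in spec, linarith)+
  have ne: "cbox a b \<noteq> {}" 
  proof -
    have "a \<in> cbox a b" using R by (auto simp: mem_box_cart a_def b_def)
    then show ?thesis by auto
  qed
  have "emeasure lborel (box a b) = emeasure lborel (cbox a b)"
    by (simp add: emeasure_lborel_box_eq emeasure_lborel_cbox_eq)
  also have "\<dots> = ennreal (measure lborel (cbox a b))"
    using emeasure_lborel_cbox_finite[of a b] by (intro emeasure_eq_ennreal_measure) auto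
  also have "measure lborel (cbox a b) = (\<Prod>i\<in>(UNIV::'n set). 2*R)"
    using ne by (simp add: content_cbox_cart a_def b_def)
  finally show ?thesis using eq by simp
qed

lemma geo_term:
  fixes t r :: real and N k :: nat
  assumes t: "t > 0"
  shows "(2/2^k) powr r * (2*(2^k*t))^N = (t^N * 2 powr r * 2^N) * (2 powr (real N - r))^k"
proof -
  have a0: "((2::real)^k) powr r = (2 powr r)^k"
  proof -
    have "((2::real)^k) powr r = (2 powr real k) powr r" by (simp add: powr_realpow)
    also have "\<dots> = (2 powr r) powr real k" by (simp add: powr_powr mult.commute)
    also have "\<dots> = (2 powr r)^k" by (simp add: powr_realpow)
    finally show ?thesis .
  qed
  have a: "(2/2^k) powr r = 2 powr r / (2 powr r)^k"
    by (simp add: powr_divide a0)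
  have b: "(2 powr (real N - r))^k = (2^N)^k / (2 powr r)^k"
    by (simp add: powr_diff power_divide powr_realpow)
  have c0: "((2::real)^k)^N = (2^N)^k" by (metis power_mult mult.commute)
  have c: "(2*(2^k*t))^N = 2^N * (2^N)^k * t^N"
    by (simp only: power_mult_distrib c0)
  show ?thesis unfolding a b c by (simp add: divide_simps)
qed

lemma DY:
  fixes v :: "real^'n::finite"
  assumes t: "t > 0" and r: "r > real CARD('n)"
  shows "(\<integral>\<^sup>+ y. ennreal ((t/(t+linf(y-v))) powr r) \<partial>lborel)
     \<le> ennreal (t^CARD('n) * (2 powr r * 2^CARD('n) / (1 - 2 powr (real CARD('n) - r))))"
proof -
  let ?N = "CARD('n)"
  let ?c = "\<lambda>k::nat. (2/2^k) powr r"
  let ?\<rho> = "2 powr (real ?N - r)"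
  have r0: "r > 0" using r by (metis of_nat_0_le_iff order_le_less_trans)
  have rho: "?\<rho> < 1" "0 \<le> ?\<rho>" using r by (auto intro!: powr_less_one)
  have "(\<integral>\<^sup>+ y. ennreal ((t/(t+linf(y-v))) powr r) \<partial>lborel)
      \<le> (\<integral>\<^sup>+ y. (\<Sum>k. ennreal (?c k) * indicator {..<2^k*t} (linf (y-v))) \<partial>lborel)"
    by (intro nn_integral_mono dyadic_pt) (use t r0 linf_nonneg in auto)
  also have "\<dots> = (\<Sum>k. \<integral>\<^sup>+ y. ennreal (?c k) * indicator {..<2^k*t} (linf (y-v)) \<partial>lborel)"
    by (rule nn_integral_suminf) measurable
  also have "\<dots> = (\<Sum>k. ennreal (?c k * (2*(2^k*t))^?N))"
  proof (rule suminf_cong)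
    fix k :: nat
    have "(\<integral>\<^sup>+ y. ennreal (?c k) * indicator {..<2^k*t} (linf (y-v)) \<partial>lborel)
        = (\<integral>\<^sup>+ y. ennreal (?c k) * indicator {y. linf (y-v) < 2^k*t} y \<partial>lborel)"
      by (intro nn_integral_cong) (simp add: indicator_def)
    also have "\<dots> = ennreal (?c k) * emeasure lborel {y. linf (y-v) < 2^k*t}"
      by (rule nn_integral_cmult_indicator) measurable
    also have "\<dots> = ennreal (?c k * (2*(2^k*t))^?N)"
      using t by (subst emeasure_linf_ball) (auto simp: ennreal_mult)
    finally show "(\<integral>\<^sup>+ y. ennreal (?c k) * indicator {..<2^k*t} (linf (y-v)) \<partial>lborel) = ennreal (?c k * (2*(2^k*t))^?N)" .
  qed
  also have "\<dots> = (\<Sum>k. ennreal ((t^?N * 2 powr r * 2^?N) * ?\<rho>^k))"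
    by (intro suminf_cong arg_cong[where f=ennreal] geo_term[OF t])
  also have "\<dots> = ennreal (\<Sum>k. (t^?N * 2 powr r * 2^?N) * ?\<rho>^k)"
    using rho t by (intro suminf_ennreal2) (auto intro!: summable_mult summable_geometric)
  also have "(\<Sum>k. (t^?N * 2 powr r * 2^?N) * ?\<rho>^k) = (t^?N * 2 powr r * 2^?N) * (1 / (1 - ?\<rho>))"
    using rho by (intro sums_unique[symmetric] sums_mult geometric_sums) auto
  finally show ?thesis by (simp add: mult.assoc)
qed

lemma pt_real:
  fixes t a b c p q :: real
  assumes t: "t>0" and a: "a\<ge>0" and b: "b\<ge>0" and c: "c\<ge>0" "c \<le> a + b" and p: "p>0" and q: "q \<ge> p"
  shows "(t+a) powr (-p) * (t/(t+b)) powr q \<le> 2 powr p * (t+c) powr (-p) * ((t/(t+b)) powr q + (t/(t+a)) powr p)"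
proof (cases "t + c \<le> 2*(t+a)")
  case True
  have "(t+a) powr (-p) \<le> ((t+c)/2) powr (-p)" using True t c p by (intro powr_mono2') auto
  also have "\<dots> = (t+c) powr (-p) / 2 powr (-p)" by (rule powr_divide)
  also have "\<dots> = 2 powr p * (t+c) powr (-p)" by (simp add: powr_minus divide_inverse mult.commute)
  finally have 1: "(t+a) powr (-p) \<le> 2 powr p * (t+c) powr (-p)" .
  have "(t+a) powr (-p) * (t/(t+b)) powr q \<le> 2 powr p * (t+c) powr (-p) * (t/(t+b)) powr q"
    by (rule mult_right_mono[OF 1]) simp
  also have "\<dots> \<le> 2 powr p * (t+c) powr (-p) * ((t/(t+b)) powr q + (t/(t+a)) powr p)"
    by (intro mult_left_mono) auto
  finally show ?thesis .
next
  case False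
  hence tc: "t + c < 2*(t+b)" using c a b t by argo
  have xb: "t/(t+b) \<le> 1" "0 \<le> t/(t+b)" using t b by auto
  have "(t/(t+b)) powr q \<le> (t/(t+b)) powr p" using xb q by (intro powr_mono') auto
  also have "\<dots> \<le> (2*t/(t+c)) powr p"
  proof (intro powr_mono2)
    have "2*t/(2*(t+b)) \<le> 2*t/(t+c)" by (rule divide_left_mono) (use tc t c b in auto)
    moreover have "2*t/(2*(t+b)) = t/(t+b)" by (rule mult_divide_mult_cancel_left) simp
    ultimately show "t/(t+b) \<le> 2*t/(t+c)" by simp
  qed (use p xb in auto)
  finally have B: "(t/(t+b)) powr q \<le> (2*t/(t+c)) powr p" .
  have "(t+a) powr (-p) * (t/(t+b)) powr q \<le> (t+a) powr (-p) * (2*t/(t+c)) powr p"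
    by (rule mult_left_mono[OF B]) simp
  also have "\<dots> = 2 powr p * (t+c) powr (-p) * (t/(t+a)) powr p"
  proof -
    have e1: "(2*t/(t+c)) powr p = 2 powr p * t powr p / (t+c) powr p" by (simp add: powr_divide powr_mult)
    have e2: "(t/(t+a)) powr p = t powr p / (t+a) powr p" by (rule powr_divide)
    have e3: "(t+a) powr (-p) = 1 / (t+a) powr p" "(t+c) powr (-p) = 1 / (t+c) powr p" by (rule powr_minus_divide)+
    show ?thesis unfolding e1 e2 e3 by simp
  qed
  also have "\<dots> \<le> 2 powr p * (t+c) powr (-p) * ((t/(t+b)) powr q + (t/(t+a)) powr p)"
    by (intro mult_left_mono) auto
  finally show ?thesis .
qed

definition Dc :: "nat \<Rightarrow> real \<Rightarrow> real" where
  "Dc N r = 2 powr r * 2^N / (1 - 2 powr (real N - r))"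

lemma Dc_pos: "r > real N \<Longrightarrow> Dc N r > 0"
  unfolding Dc_def by (auto intro!: divide_pos_pos powr_less_one)

lemma conv_bound:
  fixes u :: "real^'n::finite"
  assumes t: "t > 0" and p: "p > real CARD('n)" and q: "q \<ge> p"
  shows "(\<integral>\<^sup>+ y. ennreal ((t + linf(u - y)) powr (-p) * (t/(t+linf y)) powr q / t^CARD('n)) \<partial>lborel)
     \<le> ennreal (2 powr p * (Dc CARD('n) q + Dc CARD('n) p) * (t + linf u) powr (-p))"
proof -
  let ?N = "CARD('n)"
  define K where "K = 2 powr p * (t + linf u) powr (-p) / t^?N"
  have K0: "K \<ge> 0" unfolding K_def using t by simp
  have p0: "p > 0" using p by (metis of_nat_0_le_iff order_le_less_trans)
  have pw: "ennreal ((t + linf(u - y)) powr (-p) * (t/(t+linf y)) powr q / t^?N)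
     \<le> ennreal (K * (t/(t+linf(y-(0::real^'n)))) powr q) + ennreal (K * (t/(t+linf(y-u))) powr p)" for y
  proof -
    have lu: "linf u \<le> linf (u - y) + linf y" using linf_triangle[of "u-y" y] by simp
    have "(t + linf(u - y)) powr (-p) * (t/(t+linf y)) powr q
       \<le> 2 powr p * (t + linf u) powr (-p) * ((t/(t+linf y)) powr q + (t/(t+linf(u-y))) powr p)"
      by (rule pt_real) (use t linf_nonneg lu p0 q in auto)
    then have "(t + linf(u - y)) powr (-p) * (t/(t+linf y)) powr q / t^?N
       \<le> K * (t/(t+linf(y-(0::real^'n)))) powr q + K * (t/(t+linf(y-u))) powr p"
      using t by (simp add: K_def linf_sub[of u y] divide_right_mono field_simps)
    then show ?thesis using K0 by (simp add: ennreal_plus[symmetric] ennreal_leI del: ennreal_plus)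
  qed
  have "(\<integral>\<^sup>+ y. ennreal ((t + linf(u - y)) powr (-p) * (t/(t+linf y)) powr q / t^?N) \<partial>lborel)
     \<le> (\<integral>\<^sup>+ y. ennreal (K * (t/(t+linf(y-(0::real^'n)))) powr q) + ennreal (K * (t/(t+linf(y-u))) powr p) \<partial>lborel)"
    by (intro nn_integral_mono pw)
  also have "\<dots> = (\<integral>\<^sup>+ y. ennreal K * ennreal ((t/(t+linf(y-(0::real^'n)))) powr q) + ennreal K * ennreal ((t/(t+linf(y-u))) powr p) \<partial>lborel)"
    using K0 by (intro nn_integral_cong) (simp add: ennreal_mult)
  also have "\<dots> = (\<integral>\<^sup>+ y. ennreal K * ennreal ((t/(t+linf(y-(0::real^'n)))) powr q) \<partial>lborel)
                 + (\<integral>\<^sup>+ y. ennreal K * ennreal ((t/(t+linf(y-u))) powr p) \<partial>lborel)"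
    apply (rule nn_integral_add)
    apply measurable
    done
  also have "\<dots> = ennreal K * (\<integral>\<^sup>+ y. ennreal ((t/(t+linf(y-(0::real^'n)))) powr q) \<partial>lborel)
                 + ennreal K * (\<integral>\<^sup>+ y. ennreal ((t/(t+linf(y-u))) powr p) \<partial>lborel)"
    by (simp add: nn_integral_cmult)
  also have "\<dots> \<le> ennreal K * ennreal (t^?N * Dc ?N q) + ennreal K * ennreal (t^?N * Dc ?N p)"
    using DY[OF t, of q "0::real^'n"] DY[OF t p, of u] p q
    by (intro add_mono mult_left_mono) (auto simp: Dc_def)
  also have "\<dots> = ennreal (2 powr p * (Dc ?N q + Dc ?N p) * (t + linf u) powr (-p))"
    using K0 t Dc_pos[of ?N q] Dc_pos[of ?N p] p q
    by (simp add: ennreal_mult[symmetric] ennreal_plus[symmetric] K_def field_simps del: ennreal_plus)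
  finally show ?thesis .
qed

lemma nn_integral_prod_split:
  fixes a :: "real^'n::finite \<Rightarrow> ennreal" and b :: "real^'m::finite \<Rightarrow> ennreal"
  assumes [measurable]: "a \<in> borel_measurable borel" "b \<in> borel_measurable borel"
  shows "(\<integral>\<^sup>+ y. a (fst y) * b (snd y) \<partial>(lborel :: ((real^'n) \<times> (real^'m)) measure))
       = (\<integral>\<^sup>+ x. a x \<partial>lborel) * (\<integral>\<^sup>+ x. b x \<partial>lborel)"
proof -
  have "(\<integral>\<^sup>+ y. a (fst y) * b (snd y) \<partial>(lborel :: ((real^'n) \<times> (real^'m)) measure))
      = (\<integral>\<^sup>+ y. a (fst y) * b (snd y) \<partial>(lborel \<Otimes>\<^sub>M lborel))"
    by (simp add: lborel_prod)
  also have "\<dots> = (\<integral>\<^sup>+ x. \<integral>\<^sup>+ y. a x * b y \<partial>lborel \<partial>lborel)"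
    by (subst lborel.nn_integral_fst[symmetric]) (auto simp: measurable_split_conv)
  also have "\<dots> = (\<integral>\<^sup>+ x. a x * (\<integral>\<^sup>+ y. b y \<partial>lborel) \<partial>lborel)"
    by (simp add: nn_integral_cmult)
  also have "\<dots> = (\<integral>\<^sup>+ x. a x \<partial>lborel) * (\<integral>\<^sup>+ x. b x \<partial>lborel)"
    by (simp add: nn_integral_multc)
  finally show ?thesis .
qed

lemma pair_sf: "pair_sigma_finite (lborel :: (real^'n::finite) measure) (lborel :: (real^'m::finite) measure)"
  by (simp add: pair_sigma_finite_def lborel.sigma_finite_measure_axioms)

lemma integral_prod_zero_snd:
  fixes \<phi> :: "real^'n::finite \<Rightarrow> real" and \<psi> :: "real^'m::finite \<Rightarrow> real"
  assumes "(LINT x|lborel. \<psi> x) = 0"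
  shows "(LINT z|(lborel :: ((real^'n) \<times> (real^'m)) measure). \<phi> (fst z) * \<psi> (snd z)) = 0"
proof (cases "integrable (lborel :: ((real^'n) \<times> (real^'m)) measure) (\<lambda>z. \<phi> (fst z) * \<psi> (snd z))")
  case True
  interpret P: pair_sigma_finite "lborel :: (real^'n) measure" "lborel :: (real^'m) measure" by (rule pair_sf)
  have eq: "(\<lambda>z. \<phi> (fst z) * \<psi> (snd z)) = (\<lambda>(x,y). \<phi> x * \<psi> y)" by auto
  have I: "integrable (lborel \<Otimes>\<^sub>M lborel) (\<lambda>(x,y). \<phi> x * \<psi> y)"
    using True by (simp add: lborel_prod eq)
  have "(LINT z|(lborel :: ((real^'n) \<times> (real^'m)) measure). \<phi> (fst z) * \<psi> (snd z))
      = integral\<^sup>L (lborel \<Otimes>\<^sub>M lborel) (\<lambda>(x,y). \<phi> x * \<psi> y)"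
    by (simp add: lborel_prod eq)
  also have "\<dots> = (LINT x|lborel. (LINT y|lborel. \<phi> x * \<psi> y))"
    using pair_sigma_finite.integral_fst[OF pair_sf I] by simp
  also have "\<dots> = 0" using assms by simp
  finally show ?thesis .
qed (simp add: not_integrable_integral_eq)

lemma integral_prod_zero_fst:
  fixes \<phi> :: "real^'n::finite \<Rightarrow> real" and \<psi> :: "real^'m::finite \<Rightarrow> real"
  assumes "(LINT x|lborel. \<phi> x) = 0"
  shows "(LINT z|(lborel :: ((real^'n) \<times> (real^'m)) measure). \<phi> (fst z) * \<psi> (snd z)) = 0"
proof (cases "integrable (lborel :: ((real^'n) \<times> (real^'m)) measure) (\<lambda>z. \<phi> (fst z) * \<psi> (snd z))")
  case True
  interpret P: pair_sigma_finite "lborel :: (real^'n) measure" "lborel :: (real^'m) measure" by (rule pair_sf)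
  have eq: "(\<lambda>z. \<phi> (fst z) * \<psi> (snd z)) = (\<lambda>(x,y). \<phi> x * \<psi> y)" by auto
  have I: "integrable (lborel \<Otimes>\<^sub>M lborel) (\<lambda>(x,y). \<phi> x * \<psi> y)"
    using True by (simp add: lborel_prod eq)
  have "(LINT z|(lborel :: ((real^'n) \<times> (real^'m)) measure). \<phi> (fst z) * \<psi> (snd z))
      = integral\<^sup>L (lborel \<Otimes>\<^sub>M lborel) (\<lambda>(x,y). \<phi> x * \<psi> y)"
    by (simp add: lborel_prod eq)
  also have "\<dots> = (LINT y|lborel. (LINT x|lborel. \<phi> x * \<psi> y))"
    using pair_sigma_finite.integral_snd[OF pair_sf I] by simp
  also have "\<dots> = 0" using assms by simp
  finally show ?thesis .
qed (simp add: not_integrable_integral_eq)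

lemma dside_pos: "dside k > 0" unfolding dside_def by simp

lemma vec_nth_meas: "(\<lambda>x::real^'n::finite. x$i) \<in> borel_measurable borel"
  using bounded_linear_vec_nth[of i] by (intro borel_measurable_continuous_onI linear_continuous_on)

lemma haar1_meas: "haar1 a l e \<in> borel_measurable borel"
  by (cases e) (simp_all add: haar1_def[abs_def])

lemma haar_meas: "haar k j eta \<in> borel_measurable borel"
  unfolding haar_def[abs_def]
  by (intro borel_measurable_prod measurable_compose[OF vec_nth_meas haar1_meas])

lemma haar1_abs_le: "l > 0 \<Longrightarrow> \<bar>haar1 a l e s\<bar> \<le> indicator {a..<a+l} s / sqrt l"
  unfolding haar1_def by (auto simp: indicator_def)

lemma haar1_ne: "l > 0 \<Longrightarrow> s \<in> {a..<a+l} \<Longrightarrow> haar1 a l e s \<noteq> 0"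
  unfolding haar1_def by (auto simp: indicator_def)

lemma dcube_iff: "x \<in> dcube k j \<longleftrightarrow> (\<forall>i. x$i \<in> {real_of_int (j i) * dside k ..< real_of_int (j i) * dside k + dside k})"
proof -
  have "x \<in> dcube k j \<longleftrightarrow> (\<forall>i. real_of_int (j i) * dside k \<le> x $ i \<and> x $ i < (real_of_int (j i) + 1) * dside k)"
    unfolding dcube_def by (rule mem_Collect_eq)
  also have "\<dots> \<longleftrightarrow> (\<forall>i. x$i \<in> {real_of_int (j i) * dside k ..< real_of_int (j i) * dside k + dside k})"
    by (simp add: distrib_right)
  finally show ?thesis .
qed

lemma haar_abs_le:
  fixes x :: "real^'n::finite"
  shows "\<bar>haar k j eta x\<bar> \<le> indicator (dcube k j) x / sqrt (dside k ^ CARD('n))"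
proof -
  let ?l = "dside k"
  let ?a = "\<lambda>i. real_of_int (j i) * ?l"
  have l: "?l > 0" by (rule dside_pos)
  have "\<bar>haar k j eta x\<bar> = (\<Prod>i\<in>UNIV. \<bar>haar1 (?a i) ?l (eta i) (x$i)\<bar>)"
    unfolding haar_def by (simp add: abs_prod)
  also have "\<dots> \<le> (\<Prod>i\<in>UNIV. indicator {?a i..<?a i + ?l} (x$i) / sqrt ?l)"
    by (intro prod_mono conjI haar1_abs_le[OF l]) simp
  also have "\<dots> = (\<Prod>i\<in>UNIV. indicator {?a i..<?a i + ?l} (x$i)) / sqrt ?l ^ CARD('n)"
    by (simp add: prod_dividef)
  also have "(\<Prod>i\<in>UNIV. indicator {?a i..<?a i + ?l} (x$i) :: real) = indicator (dcube k j) x"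
  proof (cases "x \<in> dcube k j")
    case True
    then have "\<forall>i. x$i \<in> {?a i..<?a i + ?l}" using dcube_iff by blast
    then show ?thesis using True by (simp add: indicator_def)
  next
    case False
    then obtain i where "x$i \<notin> {?a i..<?a i + ?l}" unfolding dcube_iff by blast
    then have "indicator {?a i..<?a i + ?l} (x$i) = (0::real)" by simp
    then show ?thesis using False by (simp add: prod_zero_iff) blast
  qed
  finally show ?thesis by (simp add: real_sqrt_power)
qed

lemma haar_ne:
  assumes "x \<in> dcube k j"
  shows "haar k j eta x \<noteq> 0"
proof -
  have "\<And>i. haar1 (real_of_int (j i) * dside k) (dside k) (eta i) (x $ i) \<noteq> 0"
    using assms dside_pos[of k] unfolding dcube_iff by (intro haar1_ne) auto
  then show ?thesis unfolding haar_def by simp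
qed

lemma haar_nn_L1:
  "(\<integral>\<^sup>+ x. ennreal \<bar>haar k j eta (x::real^'n::finite)\<bar> \<partial>lborel) \<le> ennreal (sqrt (dside k ^ CARD('n)))"
proof -
  let ?l = "dside k"
  let ?N = "CARD('n)"
  define a :: "real^'n" where "a = (\<chi> i. real_of_int (j i) * ?l)"
  define b :: "real^'n" where "b = (\<chi> i. real_of_int (j i) * ?l + ?l)"
  have l: "?l > 0" by (rule dside_pos)
  have sub: "dcube k j \<subseteq> cbox a b"
    apply (auto simp: dcube_iff mem_box_cart a_def b_def)
    by (metis less_eq_real_def)
  have ne: "cbox a b \<noteq> {}"
  proof -
    have "a \<in> cbox a b" using l by (auto simp: mem_box_cart a_def b_def)
    then show ?thesis by auto
  qed
  have em: "emeasure lborel (cbox a b) = ennreal (?l ^ ?N)"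
  proof -
    have "emeasure lborel (cbox a b) = ennreal (measure lborel (cbox a b))"
      using emeasure_lborel_cbox_finite[of a b] by (intro emeasure_eq_ennreal_measure) auto
    also have "measure lborel (cbox a b) = (\<Prod>i\<in>(UNIV::'n set). ?l)"
      using ne by (simp add: content_cbox_cart a_def b_def)
    finally show ?thesis by simp
  qed
  have s0: "sqrt (?l ^ ?N) > 0" using l by simp
  have "(\<integral>\<^sup>+ x. ennreal \<bar>haar k j eta x\<bar> \<partial>lborel)
      \<le> (\<integral>\<^sup>+ x. ennreal (1 / sqrt (?l ^ ?N)) * indicator (cbox a b) x \<partial>lborel)"
  proof (intro nn_integral_mono)
    fix x :: "real^'n"
    have "\<bar>haar k j eta x\<bar> \<le> indicator (dcube k j) x / sqrt (?l ^ ?N)" by (rule haar_abs_le)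
    also have "\<dots> \<le> indicator (cbox a b) x / sqrt (?l ^ ?N)"
      using sub s0 by (intro divide_right_mono) (auto simp: indicator_def)
    finally show "ennreal \<bar>haar k j eta x\<bar> \<le> ennreal (1 / sqrt (?l ^ ?N)) * indicator (cbox a b) x"
      by (auto simp: indicator_def intro: ennreal_leI)
  qed
  also have "\<dots> = ennreal (1 / sqrt (?l ^ ?N)) * emeasure lborel (cbox a b)"
    by (rule nn_integral_cmult_indicator) simp
  also have "\<dots> = ennreal (1 / sqrt (?l ^ ?N) * ?l ^ ?N)"
    using l by (simp add: em ennreal_mult[symmetric])
  also have "1 / sqrt (?l ^ ?N) * ?l ^ ?N = sqrt (?l ^ ?N)"
    using s0 by (metis div_by_1 divide_divide_eq_right mult.commute real_div_sqrt less_imp_le l zero_le_power)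
  finally show ?thesis .
qed

lemma haar_integrable: "integrable lborel (haar k j eta :: real^'n::finite \<Rightarrow> real)"
proof -
  have "(\<integral>\<^sup>+ x. ennreal (norm (haar k j eta (x::real^'n))) \<partial>lborel) < \<infinity>"
    using haar_nn_L1[of k j eta] by (simp add: le_less_trans)
  then show ?thesis using haar_meas by (intro integrableI_bounded) auto
qed

lemma haar_integral_zero:
  assumes "eta \<noteq> (\<lambda>_. False)"
  shows "(LINT x|lborel. haar k j eta (x::real^'n::finite)) = 0"
proof -
  obtain i0 where i0: "eta i0" using assms by auto
  let ?l = "dside k"
  let ?a = "\<lambda>i. real_of_int (j i) * ?l"
  define eta' where "eta' = eta(i0 := False)"
  define P where "P = (\<lambda>x::real^'n. \<Prod>i\<in>UNIV-{i0}. haar1 (?a i) ?l (eta i) (x$i))"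
  define g where "g = (\<lambda>x::real^'n. (haar k j eta' x + haar k j eta x) / 2)"
  define e :: "real^'n" where "e = axis i0 (?l/2)"
  have hP: "haar k j eta x = haar1 (?a i0) ?l True (x$i0) * P x" for x
    unfolding haar_def P_def using i0 by (simp add: prod.remove[of UNIV i0])
  have hP': "haar k j eta' x = haar1 (?a i0) ?l False (x$i0) * P x" for x
  proof -
    have "haar k j eta' x = haar1 (?a i0) ?l (eta' i0) (x$i0) * (\<Prod>i\<in>UNIV-{i0}. haar1 (?a i) ?l (eta' i) (x$i))"
      unfolding haar_def by (simp add: prod.remove[of UNIV i0])
    also have "(\<Prod>i\<in>UNIV-{i0}. haar1 (?a i) ?l (eta' i) (x$i)) = P x"
      unfolding P_def eta'_def by (intro prod.cong) auto
    moreover have "eta' i0 = False" by (simp add: eta'_def)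
    ultimately show ?thesis by simp
  qed
  have Pe: "P (x - e) = P x" for x
    unfolding P_def e_def by (intro prod.cong) (auto simp: axis_def)
  have gx: "g x = indicator {?a i0..<?a i0 + ?l/2} (x$i0) / sqrt ?l * P x" for x
    unfolding g_def hP hP' haar1_def by (auto simp: indicator_def field_simps)
  have hg: "haar k j eta x = g x - g (x - e)" for x
  proof -
    have "(x - e)$i0 = x$i0 - ?l/2" by (simp add: e_def)
    then show ?thesis unfolding gx Pe hP haar1_def by (auto simp: indicator_def field_simps)
  qed
  have gi: "integrable lborel g"
    unfolding g_def by (intro integrable_divide Bochner_Integration.integrable_add haar_integrable)
  have gm: "g \<in> borel_measurable borel"
    unfolding g_def[abs_def] using haar_meas by measurable
  have shift: "(LINT x|lborel. g (x - e)) = (LINT x|lborel. g x)"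
  proof -
    have "(LINT x|lborel. g x) = integral\<^sup>L (distr lborel borel ((+) (-e))) g"
      by (simp add: lborel_distr_plus)
    also have "\<dots> = (LINT x|lborel. g (-e + x))"
      using gm by (intro integral_distr) auto
    finally show ?thesis by simp
  qed
  have gi2: "integrable lborel (\<lambda>x. g (x - e))"
  proof -
    have "(\<lambda>x. g (x - e)) = (\<lambda>x. g x - haar k j eta x)" using hg by (auto simp: fun_eq_iff)
    then show ?thesis using Bochner_Integration.integrable_diff[OF gi haar_integrable[of k j eta]] by simp
  qed
  have "(LINT x|lborel. haar k j eta x) = (LINT x|lborel. g x - g (x - e))" using hg by simp
  also have "\<dots> = 0" using gi gi2 shift by simp
  finally show ?thesis .
qed

lemma A1_all:
  assumes "assumption1 C \<alpha> \<beta> (K :: ('n::finite,'m::finite) kernel)" "t1 > 0" "t2 > 0"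
  shows "\<bar>K t1 t2 (x1, x2) (y1, y2)\<bar>
         \<le> C * (t1 powr \<alpha> / (t1 + linf (x1 - y1)) powr (real CARD('n) + \<alpha>))
              * (t2 powr \<beta> / (t2 + linf (x2 - y2)) powr (real CARD('m) + \<beta>))"
    and "linf (y1 - y1') < t1 / 2 \<Longrightarrow> linf (y2 - y2') < t2 / 2 \<Longrightarrow>
        \<bar>K t1 t2 (x1, x2) (y1, y2) - K t1 t2 (x1, x2) (y1, y2')
          - K t1 t2 (x1, x2) (y1', y2) + K t1 t2 (x1, x2) (y1', y2')\<bar>
         \<le> C * (linf (y1 - y1') powr \<alpha> / (t1 + linf (x1 - y1)) powr (real CARD('n) + \<alpha>))
              * (linf (y2 - y2') powr \<beta> / (t2 + linf (x2 - y2)) powr (real CARD('m) + \<beta>))"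
  using assms(1)[unfolded assumption1_def, rule_format, OF assms(2) assms(3)] by blast+

lemma assm_C_nonneg:
  assumes "assumption1 C \<alpha> \<beta> (K :: ('n::finite,'m::finite) kernel)"
  shows "C \<ge> 0"
proof (rule ccontr)
  assume "\<not> C \<ge> 0"
  then have C: "C < 0" by simp
  let ?x1 = "0::real^'n" and ?x2 = "0::real^'m"
  have "\<bar>K 1 1 (?x1, ?x2) (?x1, ?x2)\<bar>
         \<le> C * (1 powr \<alpha> / (1 + linf (?x1 - ?x1)) powr (real CARD('n) + \<alpha>))
              * (1 powr \<beta> / (1 + linf (?x2 - ?x2)) powr (real CARD('m) + \<beta>))"
    by (rule A1_all(1)[OF assms]) simp_all
  also have "\<dots> < 0" using C by (simp add: linf_def mult_neg_pos)
  finally show False by simp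
qed

lemma frac_le_pow:
  fixes t r a N :: real
  assumes "t > 0" "r \<ge> 0" "a \<ge> 0" "N \<ge> 0"
  shows "t powr a / (t + r) powr (N + a) \<le> 1 / t powr N"
proof -
  have "t powr a / (t + r) powr (N + a) \<le> t powr a / t powr (N + a)"
    using assms by (intro divide_left_mono powr_mono2) auto
  also have "\<dots> = 1 / t powr N" using assms by (simp add: powr_add)
  finally show ?thesis .
qed

lemma K_bound:
  assumes A: "assumption1 C \<alpha> \<beta> (K :: ('n::finite,'m::finite) kernel)"
    and t: "t1 > 0" "t2 > 0" and ab: "\<alpha> \<ge> 0" "\<beta> \<ge> 0"
  shows "\<bar>K t1 t2 x y\<bar> \<le> C * (1 / t1 powr real CARD('n)) * (1 / t2 powr real CARD('m))"
proof -
  obtain x1 x2 where x: "x = (x1, x2)" by (cases x)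
  obtain y1 y2 where y: "y = (y1, y2)" by (cases y)
  have C: "C \<ge> 0" by (rule assm_C_nonneg[OF A])
  have "\<bar>K t1 t2 (x1, x2) (y1, y2)\<bar>
         \<le> C * (t1 powr \<alpha> / (t1 + linf (x1 - y1)) powr (real CARD('n) + \<alpha>))
              * (t2 powr \<beta> / (t2 + linf (x2 - y2)) powr (real CARD('m) + \<beta>))"
    by (rule A1_all(1)[OF A t])
  also have "\<dots> \<le> C * (1 / t1 powr real CARD('n)) * (1 / t2 powr real CARD('m))"
    using C t ab linf_nonneg[of "x1-y1"] linf_nonneg[of "x2-y2"]
    by (intro mult_mono frac_le_pow mult_nonneg_nonneg) (auto simp: divide_nonneg_nonneg)
  finally show ?thesis using x y by simp
qed

definition ctr :: "int \<Rightarrow> ('n::finite \<Rightarrow> int) \<Rightarrow> real^'n" where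
  "ctr k j = (\<chi> i. (real_of_int (j i) + 1/2) * dside k)"

lemma ctr_in: "ctr k j \<in> dcube k j"
  using dside_pos[of k] unfolding dcube_iff ctr_def by (auto simp: algebra_simps)

lemma ctr_dist: "x \<in> dcube k j \<Longrightarrow> linf (x - ctr k j) \<le> dside k / 2"
  unfolding linf_le_iff
proof
  fix i assume "x \<in> dcube k j"
  then have "real_of_int (j i) * dside k \<le> x$i" "x$i < real_of_int (j i) * dside k + dside k"
    unfolding dcube_iff by auto
  moreover have "(x - ctr k j)$i = x$i - (real_of_int (j i) * dside k + dside k / 2)"
    by (simp add: ctr_def algebra_simps)
  ultimately show "\<bar>(x - ctr k j)$i\<bar> \<le> dside k / 2" unfolding abs_le_iff by linarith
qed

lemma factor_le:
  fixes A l t D E a p :: real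
  assumes "0 \<le> A" "A \<le> l" "t + D \<le> 2 * (t + E)" "t > 0" "E \<ge> 0" "D \<ge> 0" "a \<ge> 0" "p \<ge> 0"
  shows "A powr a / (t + E) powr p \<le> l powr a * 2 powr p / (t + D) powr p"
proof -
  have "A powr a / (t + E) powr p \<le> l powr a / (t + E) powr p"
    using assms by (intro divide_right_mono powr_mono2) auto
  also have "\<dots> \<le> l powr a / ((t + D)/2) powr p"
    using assms by (intro divide_left_mono powr_mono2 mult_pos_pos) auto
  also have "\<dots> = l powr a * 2 powr p / (t + D) powr p"
    using assms by (simp add: powr_divide)
  finally show ?thesis .
qed

lemma haar_nz_in: "haar k j eta x \<noteq> 0 \<Longrightarrow> x \<in> dcube k j"
  using haar_abs_le[of k j eta x] by (cases "x \<in> dcube k j") auto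

lemma f_meas:
  fixes a :: "real^'n::finite \<Rightarrow> real" and b :: "real^'m::finite \<Rightarrow> real"
  assumes "a \<in> borel_measurable borel" "b \<in> borel_measurable borel"
  shows "(\<lambda>z::(real^'n::finite) \<times> (real^'m::finite). a (fst z) * b (snd z)) \<in> borel_measurable borel"
proof -
  have "(\<lambda>z::(real^'n) \<times> (real^'m). a (fst z)) \<in> borel_measurable borel"
    by (rule measurable_compose[OF borel_measurable_continuous_onI[OF continuous_on_fst[OF continuous_on_id]] assms(1)])
  moreover have "(\<lambda>z::(real^'n) \<times> (real^'m). b (snd z)) \<in> borel_measurable borel"
    by (rule measurable_compose[OF borel_measurable_continuous_onI[OF continuous_on_snd[OF continuous_on_id]] assms(2)])
  ultimately show ?thesis by (rule borel_measurable_times)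
qed

lemma f_L1:
  fixes a :: "real^'n::finite \<Rightarrow> real" and b :: "real^'m::finite \<Rightarrow> real"
  assumes [measurable]: "a \<in> borel_measurable borel" "b \<in> borel_measurable borel"
    and "(\<integral>\<^sup>+ x. ennreal \<bar>a x\<bar> \<partial>lborel) \<le> ennreal A"
    and "(\<integral>\<^sup>+ x. ennreal \<bar>b x\<bar> \<partial>lborel) \<le> ennreal B"
    and "A \<ge> 0" "B \<ge> 0"
  shows "(\<integral>\<^sup>+ z. ennreal \<bar>a (fst z) * b (snd z)\<bar> \<partial>(lborel :: ((real^'n) \<times> (real^'m)) measure)) \<le> ennreal (A * B)"
proof -
  have "(\<integral>\<^sup>+ z. ennreal \<bar>a (fst z) * b (snd z)\<bar> \<partial>(lborel :: ((real^'n) \<times> (real^'m)) measure))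
      = (\<integral>\<^sup>+ z. ennreal \<bar>a (fst z)\<bar> * ennreal \<bar>b (snd z)\<bar> \<partial>(lborel :: ((real^'n) \<times> (real^'m)) measure))"
    by (simp add: abs_mult ennreal_mult)
  also have "\<dots> = (\<integral>\<^sup>+ x. ennreal \<bar>a x\<bar> \<partial>lborel) * (\<integral>\<^sup>+ x. ennreal \<bar>b x\<bar> \<partial>lborel)"
    by (rule nn_integral_prod_split) measurable
  also have "\<dots> \<le> ennreal A * ennreal B"
    using assms by (intro mult_mono) auto
  also have "\<dots> = ennreal (A * B)" using assms by (simp add: ennreal_mult)
  finally show ?thesis .
qed

lemma theta_pw:
  fixes K :: "('n::finite,'m::finite) kernel"
  assumes A: "assumption1 C \<alpha> \<beta> K" and ab: "\<alpha> > 0" "\<beta> > 0"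
    and t: "t1 > 0" "t2 > 0" and lt: "dside k1 < t1" "dside l1 < t2"
    and eta: "eta \<noteq> (\<lambda>_. False)" and zeta: "zeta \<noteq> (\<lambda>_. False)"
    and fdef: "f = (\<lambda>z. haar k1 j1 eta (fst z) * haar l1 i1 zeta (snd z))"
  shows "\<bar>theta K t1 t2 f (w1, w2)\<bar> \<le>
     C * (dside k1 powr \<alpha> * 2 powr (real CARD('n) + \<alpha>) / (t1 + linf (w1 - ctr k1 j1)) powr (real CARD('n) + \<alpha>))
       * (dside l1 powr \<beta> * 2 powr (real CARD('m) + \<beta>) / (t2 + linf (w2 - ctr l1 i1)) powr (real CARD('m) + \<beta>))
       * (sqrt (dside k1 ^ CARD('n)) * sqrt (dside l1 ^ CARD('m)))"
proof -
  let ?N = "real CARD('n)" and ?M = "real CARD('m)"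
  define h1 where "h1 = haar k1 j1 eta"
  define h2 where "h2 = haar l1 i1 zeta"
  define c1 where "c1 = ctr k1 j1"
  define c2 where "c2 = ctr l1 i1"
  define w where "w = (w1, w2)"
  define B1 where "B1 = dside k1 powr \<alpha> * 2 powr (?N + \<alpha>) / (t1 + linf (w1 - c1)) powr (?N + \<alpha>)"
  define B2 where "B2 = dside l1 powr \<beta> * 2 powr (?M + \<beta>) / (t2 + linf (w2 - c2)) powr (?M + \<beta>)"
  define S where "S = sqrt (dside k1 ^ CARD('n)) * sqrt (dside l1 ^ CARD('m))"
  define Kc where "Kc = C * (1 / t1 powr ?N) * (1 / t2 powr ?M)"
  have C: "C \<ge> 0" by (rule assm_C_nonneg[OF A])
  have B1: "B1 \<ge> 0" unfolding B1_def by simp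
  have B2: "B2 \<ge> 0" unfolding B2_def by simp
  have S: "S \<ge> 0" unfolding S_def using dside_pos[of k1] dside_pos[of l1] by simp
  have f: "f = (\<lambda>z. h1 (fst z) * h2 (snd z))" unfolding fdef h1_def h2_def ..
  have h1m[measurable]: "h1 \<in> borel_measurable borel" unfolding h1_def by (rule haar_meas)
  have h2m[measurable]: "h2 \<in> borel_measurable borel" unfolding h2_def by (rule haar_meas)
  have fm: "f \<in> borel_measurable borel" unfolding f by (rule f_meas[OF h1m h2m])
  have fL1: "(\<integral>\<^sup>+ z. ennreal \<bar>f z\<bar> \<partial>lborel) \<le> ennreal S"
    unfolding f S_def h1_def h2_def
    by (rule f_L1[OF haar_meas haar_meas haar_nn_L1 haar_nn_L1]) (simp_all add: less_imp_le[OF dside_pos])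
  have fi: "integrable lborel f"
  proof (rule integrableI_bounded)
    show "f \<in> borel_measurable lborel" using fm by simp
    show "(\<integral>\<^sup>+ z. ennreal (norm (f z)) \<partial>lborel) < \<infinity>"
      using fL1 by (simp add: le_less_trans)
  qed
  have int_h1: "(LINT x|lborel. h1 x) = 0" unfolding h1_def by (rule haar_integral_zero[OF eta])
  have int_h2: "(LINT x|lborel. h2 x) = 0" unfolding h2_def by (rule haar_integral_zero[OF zeta])
  have RHS: "0 \<le> C * B1 * B2 * S" using C B1 B2 S by simp
  show ?thesis
  proof (cases "integrable lborel (\<lambda>z. K t1 t2 w z * f z)")
    case False
    then have "theta K t1 t2 f (w1, w2) = 0"
      unfolding theta_def w_def by (simp add: not_integrable_integral_eq)
    then show ?thesis using RHS unfolding B1_def B2_def S_def c1_def c2_def by simp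
  next
    case True
    define KF where "KF = (\<lambda>z. K t1 t2 w z * f z)"
    define \<phi>1 where "\<phi>1 = (\<lambda>z1. K t1 t2 w (z1, c2) * h1 z1)"
    define \<psi>2 where "\<psi>2 = (\<lambda>z2. K t1 t2 w (c1, z2) * h2 z2)"
    define T1 where "T1 = (\<lambda>z. \<phi>1 (fst z) * h2 (snd z))"
    define T2 where "T2 = (\<lambda>z. h1 (fst z) * \<psi>2 (snd z))"
    define T3 where "T3 = (\<lambda>z. K t1 t2 w (c1, c2) * f z)"
    have KFm: "KF \<in> borel_measurable borel"
      using borel_measurable_integrable[OF True] unfolding KF_def by simp
    have h2c: "h2 c2 \<noteq> 0" unfolding h2_def c2_def by (rule haar_ne[OF ctr_in])
    have h1c: "h1 c1 \<noteq> 0" unfolding h1_def c1_def by (rule haar_ne[OF ctr_in])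
    have "(\<lambda>z1. KF (z1, c2)) \<in> borel_measurable borel"
      by (rule measurable_compose[OF borel_measurable_continuous_onI KFm])
         (intro continuous_intros)
    then have "(\<lambda>z1. KF (z1, c2) / h2 c2) \<in> borel_measurable borel" by simp
    moreover have "(\<lambda>z1. KF (z1, c2) / h2 c2) = \<phi>1"
      using h2c by (auto simp: KF_def \<phi>1_def f fun_eq_iff)
    ultimately have \<phi>1m: "\<phi>1 \<in> borel_measurable borel" by simp
    have "(\<lambda>z2. KF (c1, z2)) \<in> borel_measurable borel"
      by (rule measurable_compose[OF borel_measurable_continuous_onI KFm])
         (intro continuous_intros)
    then have "(\<lambda>z2. KF (c1, z2) / h1 c1) \<in> borel_measurable borel" by simp
    moreover have "(\<lambda>z2. KF (c1, z2) / h1 c1) = \<psi>2"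
      using h1c by (auto simp: KF_def \<psi>2_def f fun_eq_iff)
    ultimately have \<psi>2m: "\<psi>2 \<in> borel_measurable borel" by simp
    have Kb: "\<bar>K t1 t2 x y\<bar> \<le> Kc" for x y
      unfolding Kc_def by (rule K_bound[OF A t]) (use ab in auto)
    have Kfi: "integrable lborel (\<lambda>z. Kc * f z)" using fi by simp
    have T1i: "integrable lborel T1"
    proof (rule Bochner_Integration.integrable_bound[OF Kfi])
      show "T1 \<in> borel_measurable lborel" unfolding T1_def using f_meas[OF \<phi>1m h2m] by simp
      show "AE x in lborel. norm (T1 x) \<le> norm (Kc * f x)"
      proof (intro AE_I2)
        fix z :: "(real^'n) \<times> (real^'m)"
        have "norm (T1 z) = \<bar>K t1 t2 w (fst z, c2)\<bar> * \<bar>f z\<bar>"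
          by (simp add: T1_def \<phi>1_def f abs_mult)
        also have "\<dots> \<le> Kc * \<bar>f z\<bar>" by (intro mult_right_mono Kb) simp
        also have "\<dots> \<le> norm (Kc * f z)" by (simp add: abs_mult mult_right_mono)
        finally show "norm (T1 z) \<le> norm (Kc * f z)" .
      qed
    qed
    have T2i: "integrable lborel T2"
    proof (rule Bochner_Integration.integrable_bound[OF Kfi])
      show "T2 \<in> borel_measurable lborel" unfolding T2_def using f_meas[OF h1m \<psi>2m] by simp
      show "AE x in lborel. norm (T2 x) \<le> norm (Kc * f x)"
      proof (intro AE_I2)
        fix z :: "(real^'n) \<times> (real^'m)"
        have "norm (T2 z) = \<bar>K t1 t2 w (c1, snd z)\<bar> * \<bar>f z\<bar>"
          by (simp add: T2_def \<psi>2_def f abs_mult)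
        also have "\<dots> \<le> Kc * \<bar>f z\<bar>" by (intro mult_right_mono Kb) simp
        also have "\<dots> \<le> norm (Kc * f z)" by (simp add: abs_mult mult_right_mono)
        finally show "norm (T2 z) \<le> norm (Kc * f z)" .
      qed
    qed
    have T3i: "integrable lborel T3" unfolding T3_def using fi by simp
    have I1: "integral\<^sup>L lborel T1 = 0" unfolding T1_def by (rule integral_prod_zero_snd[OF int_h2])
    have I2: "integral\<^sup>L lborel T2 = 0" unfolding T2_def by (rule integral_prod_zero_fst[OF int_h1])
    have I3: "integral\<^sup>L lborel T3 = 0"
    proof -
      have "integral\<^sup>L lborel f = 0" unfolding f by (rule integral_prod_zero_snd[OF int_h2])
      then show ?thesis unfolding T3_def by simp
    qed
    define F where "F = (\<lambda>z. KF z - T1 z - T2 z + T3 z)"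
    have Fi: "integrable lborel F" unfolding F_def KF_def
      using True T1i T2i T3i by simp
    have "theta K t1 t2 f (w1, w2) = integral\<^sup>L lborel KF"
      unfolding theta_def KF_def w_def ..
    also have "\<dots> = integral\<^sup>L lborel F"
      unfolding F_def KF_def using True T1i T2i T3i I1 I2 I3 by simp
    finally have th: "theta K t1 t2 f (w1, w2) = integral\<^sup>L lborel F" .
    have Fpw: "\<bar>F z\<bar> \<le> C * B1 * B2 * \<bar>f z\<bar>" for z
    proof -
      obtain z1 z2 where z: "z = (z1, z2)" by (cases z)
      have Feq: "F z = (K t1 t2 (w1,w2) (z1, z2) - K t1 t2 (w1,w2) (z1, c2) - K t1 t2 (w1,w2) (c1, z2)
                       + K t1 t2 (w1,w2) (c1, c2)) * f z"
        by (simp add: F_def KF_def T1_def T2_def T3_def \<phi>1_def \<psi>2_def f z w_def algebra_simps)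
      show ?thesis
      proof (cases "f z = 0")
        case True then show ?thesis using Feq by simp
      next
        case False
        then have "h1 z1 \<noteq> 0" "h2 z2 \<noteq> 0" using z f by auto
        then have in1: "z1 \<in> dcube k1 j1" and in2: "z2 \<in> dcube l1 i1"
          unfolding h1_def h2_def by (auto intro: haar_nz_in)
        have d1: "linf (z1 - c1) \<le> dside k1 / 2" unfolding c1_def by (rule ctr_dist[OF in1])
        have d2: "linf (z2 - c2) \<le> dside l1 / 2" unfolding c2_def by (rule ctr_dist[OF in2])
        have "\<bar>K t1 t2 (w1,w2) (z1, z2) - K t1 t2 (w1,w2) (z1, c2) - K t1 t2 (w1,w2) (c1, z2)
                       + K t1 t2 (w1,w2) (c1, c2)\<bar>
           \<le> C * (linf (z1 - c1) powr \<alpha> / (t1 + linf (w1 - z1)) powr (?N + \<alpha>))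
              * (linf (z2 - c2) powr \<beta> / (t2 + linf (w2 - z2)) powr (?M + \<beta>))"
          by (rule A1_all(2)[OF A t]) (use d1 d2 lt in auto)
        also have "\<dots> \<le> C * B1 * B2"
        proof -
          have tri1: "linf (w1 - c1) \<le> linf (w1 - z1) + linf (z1 - c1)"
            using linf_triangle[of "w1 - z1" "z1 - c1"] by simp
          have tri2: "linf (w2 - c2) \<le> linf (w2 - z2) + linf (z2 - c2)"
            using linf_triangle[of "w2 - z2" "z2 - c2"] by simp
          have X1: "linf (z1 - c1) powr \<alpha> / (t1 + linf (w1 - z1)) powr (?N + \<alpha>) \<le> B1"
            unfolding B1_def
            by (rule factor_le) (use d1 tri1 lt t ab linf_nonneg[of "z1 - c1"] linf_nonneg[of "w1 - z1"] linf_nonneg[of "w1 - c1"] in auto)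
          have X2: "linf (z2 - c2) powr \<beta> / (t2 + linf (w2 - z2)) powr (?M + \<beta>) \<le> B2"
            unfolding B2_def
            by (rule factor_le) (use d2 tri2 lt t ab linf_nonneg[of "z2 - c2"] linf_nonneg[of "w2 - z2"] linf_nonneg[of "w2 - c2"] in auto)
          show ?thesis using C B1 X1 X2 by (intro mult_mono mult_nonneg_nonneg) auto
        qed
        finally show ?thesis using Feq by (simp add: abs_mult mult_right_mono)
      qed
    qed
    have "ennreal \<bar>theta K t1 t2 f (w1, w2)\<bar> \<le> (\<integral>\<^sup>+ z. ennreal (norm (F z)) \<partial>lborel)"
      unfolding th using integral_norm_bound_ennreal[OF Fi] by simp
    also have "\<dots> \<le> (\<integral>\<^sup>+ z. ennreal (C * B1 * B2) * ennreal \<bar>f z\<bar> \<partial>lborel)"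
      using RHS C B1 B2 Fpw by (intro nn_integral_mono) (simp add: ennreal_mult[symmetric] ennreal_leI)
    also have "\<dots> = ennreal (C * B1 * B2) * (\<integral>\<^sup>+ z. ennreal \<bar>f z\<bar> \<partial>lborel)"
      by (rule nn_integral_cmult) (use fm in simp)
    also have "\<dots> \<le> ennreal (C * B1 * B2) * ennreal S"
      by (intro mult_left_mono fL1) simp
    also have "\<dots> = ennreal (C * B1 * B2 * S)" using C B1 B2 S by (simp add: ennreal_mult)
    finally have "\<bar>theta K t1 t2 f (w1, w2)\<bar> \<le> C * B1 * B2 * S"
      using RHS by (simp add: ennreal_le_iff)
    then show ?thesis unfolding B1_def B2_def S_def c1_def c2_def by simp
  qed
qed

lemma powr_neg2: "(Y::real) > 0 \<Longrightarrow> Y powr (-(2*e)) = 1 / (Y powr e)^2"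
  by (simp add: powr_minus_divide power2_eq_square powr_add[symmetric])

lemma dside_half: "dside k1 < dside k2 \<Longrightarrow> dside k1 \<le> dside k2 / 2"
proof -
  assume "dside k1 < dside k2"
  then have "- real_of_int k1 < - real_of_int k2" unfolding dside_def by simp
  then have "k2 + 1 \<le> k1" by linarith
  then have "- real_of_int k1 \<le> - real_of_int k2 - 1" by linarith
  then have "dside k1 \<le> 2 powr (- real_of_int k2 - 1)" unfolding dside_def by simp
  also have "\<dots> = dside k2 / 2" unfolding dside_def by (simp add: powr_diff)
  finally show ?thesis .
qed

lemma cdist_props:
  fixes A B :: "(real^'n::finite) set"
  assumes "a \<in> A" "b \<in> B"
  shows "cdist A B \<le> linf (b - a)" and "0 \<le> cdist A B"
proof -
  let ?S = "{linf (x - y) | x y. x \<in> A \<and> y \<in> B}"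
  have bdd: "bdd_below ?S" by (rule bdd_belowI[of _ 0]) (auto simp: linf_nonneg)
  have mem: "linf (b - a) \<in> ?S" using assms by (auto simp: linf_sub[of b a])
  show "cdist A B \<le> linf (b - a)" unfolding cdist_def by (rule cInf_lower[OF mem bdd])
  show "0 \<le> cdist A B" unfolding cdist_def using mem by (intro cInf_greatest) (auto simp: linf_nonneg)
qed

lemma side_bound:
  fixes t L d lu p :: real
  assumes "t > 0" "L / 2 < t" "d \<le> lu" "0 \<le> d" "L > 0" "p \<ge> 0"
  shows "(t + lu) powr (-p) \<le> 2 powr p * (L + d) powr (-p)"
proof -
  have "(t + lu) powr (-p) \<le> ((L + d)/2) powr (-p)"
    using assms by (intro powr_mono2') auto
  also have "\<dots> = (L + d) powr (-p) / 2 powr (-p)" by (rule powr_divide)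
  also have "\<dots> = 2 powr p * (L + d) powr (-p)" by (simp add: powr_minus divide_inverse mult.commute)
  finally show ?thesis .
qed

lemma main_bound:
  fixes K :: "('n::finite,'m::finite) kernel" and lam1 lam2 \<alpha> \<beta> C :: real
  assumes A: "assumption1 C \<alpha> \<beta> K"
    and lam: "lam1 > 2" "lam2 > 2"
    and ab: "0 < \<alpha>" "\<alpha> \<le> real CARD('n) * (lam1 - 2) / 2" "0 < \<beta>" "\<beta> \<le> real CARD('m) * (lam2 - 2) / 2"
    and d1: "dside k1 < dside k2" and d2: "dside l1 < dside l2"
    and eta: "eta \<noteq> (\<lambda>_. False)" and zeta: "zeta \<noteq> (\<lambda>_. False)"
    and x1: "x1 \<in> dcube k2 j2" and t1: "dside k2 / 2 < t1"
    and x2: "x2 \<in> dcube l2 i2" and t2: "dside l2 / 2 < t2"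
    and fdef: "f = (\<lambda>z. haar k1 j1 eta (fst z) * haar l1 i1 zeta (snd z))"
  shows "lhs_sq K lam1 lam2 f x1 x2 t1 t2 \<le> ennreal (
     (C^2 * (2 powr (real CARD('n) + \<alpha>) * 2 powr (real CARD('m) + \<beta>))^2
        * (2 powr (2*(real CARD('n) + \<alpha>)) * (Dc CARD('n) (real CARD('n) * lam1) + Dc CARD('n) (2*(real CARD('n) + \<alpha>))))
        * (2 powr (2*(real CARD('m) + \<beta>)) * (Dc CARD('m) (real CARD('m) * lam2) + Dc CARD('m) (2*(real CARD('m) + \<beta>))))
        * 2 powr (2*(real CARD('n) + \<alpha>)) * 2 powr (2*(real CARD('m) + \<beta>)))
     * ((dside k1 powr \<alpha> * sqrt (dside k1 ^ CARD('n)) / (dside k2 + cdist (dcube k1 j1) (dcube k2 j2)) powr (real CARD('n) + \<alpha>))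
       * (dside l1 powr \<beta> * sqrt (dside l1 ^ CARD('m)) / (dside l2 + cdist (dcube l1 i1) (dcube l2 i2)) powr (real CARD('m) + \<beta>)))^2)"
proof -
  let ?N = "real CARD('n)" and ?M = "real CARD('m)"
  define p1 where "p1 = 2*(?N + \<alpha>)"
  define p2 where "p2 = 2*(?M + \<beta>)"
  define q1 where "q1 = ?N * lam1"
  define q2 where "q2 = ?M * lam2"
  define E1 where "E1 = 2 powr p1 * (Dc CARD('n) q1 + Dc CARD('n) p1)"
  define E2 where "E2 = 2 powr p2 * (Dc CARD('m) q2 + Dc CARD('m) p2)"
  define c1 where "c1 = ctr k1 j1"
  define c2 where "c2 = ctr l1 i1"
  define u1 where "u1 = x1 - c1"
  define u2 where "u2 = x2 - c2"
  define g1 where "g1 = 2 powr (?N + \<alpha>)"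
  define g2 where "g2 = 2 powr (?M + \<beta>)"
  define a1 where "a1 = dside k1 powr \<alpha> * sqrt (dside k1 ^ CARD('n))"
  define a2 where "a2 = dside l1 powr \<beta> * sqrt (dside l1 ^ CARD('m))"
  define D1 where "D1 = dside k2 + cdist (dcube k1 j1) (dcube k2 j2)"
  define D2 where "D2 = dside l2 + cdist (dcube l1 i1) (dcube l2 i2)"
  define W where "W = C^2 * (a1 * g1)^2 * (a2 * g2)^2"
  define a where "a = (\<lambda>y1::real^'n. (t1 + linf (u1 - y1)) powr (-p1) * (t1/(t1+linf y1)) powr q1 / t1^CARD('n))"
  define b where "b = (\<lambda>y2::real^'m. (t2 + linf (u2 - y2)) powr (-p2) * (t2/(t2+linf y2)) powr q2 / t2^CARD('m))"
  have C: "C \<ge> 0" by (rule assm_C_nonneg[OF A])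
  have N0: "?N > 0" and M0: "?M > 0" by auto
  have t1p: "t1 > 0" using t1 dside_pos[of k2] by linarith
  have t2p: "t2 > 0" using t2 dside_pos[of l2] by linarith
  have lt1: "dside k1 < t1" using dside_half[OF d1] t1 by linarith
  have lt2: "dside l1 < t2" using dside_half[OF d2] t2 by linarith
  have p1: "p1 > ?N" "q1 \<ge> p1" using ab N0 unfolding p1_def q1_def by (auto simp: field_simps)
  have p2: "p2 > ?M" "q2 \<ge> p2" using ab M0 unfolding p2_def q2_def by (auto simp: field_simps)
  have W0: "W \<ge> 0" unfolding W_def by simp
  have a0: "a y \<ge> 0" for y unfolding a_def using t1p by simp
  have b0: "b y \<ge> 0" for y unfolding b_def using t2p by simp
  have pw: "ennreal (\<bar>theta K t1 t2 f (x1 - fst y, x2 - snd y)\<bar>\<^sup>2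
        * (t1 / (t1 + linf (fst y))) powr (?N * lam1)
        * (t2 / (t2 + linf (snd y))) powr (?M * lam2)
        / (t1 ^ CARD('n) * t2 ^ CARD('m))) \<le> ennreal W * (ennreal (a (fst y)) * ennreal (b (snd y)))" for y
  proof -
    obtain y1 y2 where y: "y = (y1, y2)" by (cases y)
    have e1: "x1 - y1 - c1 = u1 - y1" unfolding u1_def by (simp add: algebra_simps)
    have e2: "x2 - y2 - c2 = u2 - y2" unfolding u2_def by (simp add: algebra_simps)
    define Y1 where "Y1 = t1 + linf (u1 - y1)"
    define Y2 where "Y2 = t2 + linf (u2 - y2)"
    have Y1: "Y1 > 0" unfolding Y1_def using t1p linf_nonneg[of "u1 - y1"] by linarith
    have Y2: "Y2 > 0" unfolding Y2_def using t2p linf_nonneg[of "u2 - y2"] by linarith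
    have th: "\<bar>theta K t1 t2 f (x1 - y1, x2 - y2)\<bar> \<le>
     C * (dside k1 powr \<alpha> * g1 / Y1 powr (?N + \<alpha>))
       * (dside l1 powr \<beta> * g2 / Y2 powr (?M + \<beta>))
       * (sqrt (dside k1 ^ CARD('n)) * sqrt (dside l1 ^ CARD('m)))"
      using theta_pw[OF A ab(1) ab(3) t1p t2p lt1 lt2 eta zeta fdef, of "x1 - y1" "x2 - y2"]
      unfolding Y1_def Y2_def g1_def g2_def c1_def[symmetric] c2_def[symmetric] e1 e2 .
    also have "\<dots> = C * (a1 * g1) * (a2 * g2) / (Y1 powr (?N + \<alpha>) * Y2 powr (?M + \<beta>))"
      unfolding a1_def a2_def by (simp add: field_simps)
    finally have th2: "\<bar>theta K t1 t2 f (x1 - y1, x2 - y2)\<bar>\<^sup>2 \<le> (C * (a1 * g1) * (a2 * g2) / (Y1 powr (?N + \<alpha>) * Y2 powr (?M + \<beta>)))\<^sup>2"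
      by (intro power_mono) auto
    also have "\<dots> = W * (Y1 powr (-p1) * Y2 powr (-p2))"
      unfolding W_def p1_def p2_def powr_neg2[OF Y1] powr_neg2[OF Y2] using Y1 Y2 by (simp add: power_mult_distrib power_divide)
    finally have th3: "\<bar>theta K t1 t2 f (x1 - y1, x2 - y2)\<bar>\<^sup>2 \<le> W * (Y1 powr (-p1) * Y2 powr (-p2))" .
    have "\<bar>theta K t1 t2 f (x1 - y1, x2 - y2)\<bar>\<^sup>2
        * (t1 / (t1 + linf y1)) powr q1 * (t2 / (t2 + linf y2)) powr q2 / (t1 ^ CARD('n) * t2 ^ CARD('m))
      \<le> W * (Y1 powr (-p1) * Y2 powr (-p2)) * (t1 / (t1 + linf y1)) powr q1 * (t2 / (t2 + linf y2)) powr q2 / (t1 ^ CARD('n) * t2 ^ CARD('m))"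
      using th3 t1p t2p by (intro divide_right_mono mult_right_mono) auto
    also have "\<dots> = W * (a y1 * b y2)"
      unfolding a_def b_def Y1_def Y2_def by (simp add: field_simps)
    finally have "\<bar>theta K t1 t2 f (x1 - y1, x2 - y2)\<bar>\<^sup>2
        * (t1 / (t1 + linf y1)) powr q1 * (t2 / (t2 + linf y2)) powr q2 / (t1 ^ CARD('n) * t2 ^ CARD('m))
      \<le> W * (a y1 * b y2)" .
    then show ?thesis unfolding y q1_def q2_def using W0 a0 b0
      by (simp add: ennreal_mult[symmetric] ennreal_leI)
  qed
  have am[measurable]: "(\<lambda>y. ennreal (a y)) \<in> borel_measurable borel" unfolding a_def by measurable
  have bm[measurable]: "(\<lambda>y. ennreal (b y)) \<in> borel_measurable borel" unfolding b_def by measurable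
  have "lhs_sq K lam1 lam2 f x1 x2 t1 t2 \<le> (\<integral>\<^sup>+ y. ennreal W * (ennreal (a (fst y)) * ennreal (b (snd y))) \<partial>lborel)"
    unfolding lhs_sq_def by (intro nn_integral_mono pw)
  also have "\<dots> = ennreal W * (\<integral>\<^sup>+ y. ennreal (a (fst y)) * ennreal (b (snd y)) \<partial>lborel)"
  proof (rule nn_integral_cmult)
    have "(\<lambda>z::(real^'n) \<times> (real^'m). ennreal (a (fst z))) \<in> borel_measurable borel"
      by (rule measurable_compose[OF borel_measurable_continuous_onI[OF continuous_on_fst[OF continuous_on_id]] am])
    moreover have "(\<lambda>z::(real^'n) \<times> (real^'m). ennreal (b (snd z))) \<in> borel_measurable borel"
      by (rule measurable_compose[OF borel_measurable_continuous_onI[OF continuous_on_snd[OF continuous_on_id]] bm])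
    ultimately show "(\<lambda>z::(real^'n) \<times> (real^'m). ennreal (a (fst z)) * ennreal (b (snd z))) \<in> borel_measurable lborel"
      by simp
  qed
  also have "(\<integral>\<^sup>+ y. ennreal (a (fst y)) * ennreal (b (snd y)) \<partial>(lborel :: ((real^'n) \<times> (real^'m)) measure))
      = (\<integral>\<^sup>+ y. ennreal (a y) \<partial>lborel) * (\<integral>\<^sup>+ y. ennreal (b y) \<partial>lborel)"
    by (rule nn_integral_prod_split) measurable
  finally have Q0: "lhs_sq K lam1 lam2 f x1 x2 t1 t2 \<le> ennreal W * ((\<integral>\<^sup>+ y. ennreal (a y) \<partial>lborel) * (\<integral>\<^sup>+ y. ennreal (b y) \<partial>lborel))" .
  have ia: "(\<integral>\<^sup>+ y. ennreal (a y) \<partial>lborel) \<le> ennreal (E1 * (t1 + linf u1) powr (-p1))"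
    unfolding a_def E1_def using conv_bound[OF t1p p1] by (simp add: mult.assoc)
  have ib: "(\<integral>\<^sup>+ y. ennreal (b y) \<partial>lborel) \<le> ennreal (E2 * (t2 + linf u2) powr (-p2))"
    unfolding b_def E2_def using conv_bound[OF t2p p2] by (simp add: mult.assoc)
  have E1: "E1 \<ge> 0" unfolding E1_def using Dc_pos[of "CARD('n)" q1] Dc_pos[of "CARD('n)" p1] p1 by simp
  have E2: "E2 \<ge> 0" unfolding E2_def using Dc_pos[of "CARD('m)" q2] Dc_pos[of "CARD('m)" p2] p2 by simp
  have "lhs_sq K lam1 lam2 f x1 x2 t1 t2 \<le> ennreal W * (ennreal (E1 * (t1 + linf u1) powr (-p1)) * ennreal (E2 * (t2 + linf u2) powr (-p2)))"
    using Q0 ia ib by (meson dual_order.trans mult_left_mono mult_mono zero_le)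
  also have "\<dots> = ennreal (W * (E1 * (t1 + linf u1) powr (-p1)) * (E2 * (t2 + linf u2) powr (-p2)))"
    using W0 E1 E2 by (simp add: ennreal_mult[symmetric] mult.assoc)
  finally have Q1: "lhs_sq K lam1 lam2 f x1 x2 t1 t2 \<le> ennreal (W * (E1 * (t1 + linf u1) powr (-p1)) * (E2 * (t2 + linf u2) powr (-p2)))" .
  have cd1: "cdist (dcube k1 j1) (dcube k2 j2) \<le> linf u1" "0 \<le> cdist (dcube k1 j1) (dcube k2 j2)"
    unfolding u1_def c1_def using cdist_props[OF ctr_in x1] by auto
  have cd2: "cdist (dcube l1 i1) (dcube l2 i2) \<le> linf u2" "0 \<le> cdist (dcube l1 i1) (dcube l2 i2)"
    unfolding u2_def c2_def using cdist_props[OF ctr_in x2] by auto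
  have D1: "D1 > 0" unfolding D1_def using cd1 dside_pos[of k2] by linarith
  have D2: "D2 > 0" unfolding D2_def using cd2 dside_pos[of l2] by linarith
  have s1: "(t1 + linf u1) powr (-p1) \<le> 2 powr p1 * D1 powr (-p1)"
    unfolding D1_def by (rule side_bound) (use t1p t1 cd1 dside_pos[of k2] p1 N0 in auto)
  have s2: "(t2 + linf u2) powr (-p2) \<le> 2 powr p2 * D2 powr (-p2)"
    unfolding D2_def by (rule side_bound) (use t2p t2 cd2 dside_pos[of l2] p2 M0 in auto)
  have "W * (E1 * (t1 + linf u1) powr (-p1)) * (E2 * (t2 + linf u2) powr (-p2))
      \<le> W * (E1 * (2 powr p1 * D1 powr (-p1))) * (E2 * (2 powr p2 * D2 powr (-p2)))"
    using W0 E1 E2 s1 s2 by (intro mult_mono mult_left_mono) auto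
  also have "\<dots> = (C^2 * (g1 * g2)^2 * E1 * E2 * 2 powr p1 * 2 powr p2) * ((a1 / D1 powr (?N + \<alpha>)) * (a2 / D2 powr (?M + \<beta>)))^2"
    unfolding W_def p1_def p2_def powr_neg2[OF D1] powr_neg2[OF D2]
    by (simp add: power_mult_distrib power_divide field_simps)
  finally have fin: "W * (E1 * (t1 + linf u1) powr (-p1)) * (E2 * (t2 + linf u2) powr (-p2))
      \<le> (C^2 * (g1 * g2)^2 * E1 * E2 * 2 powr p1 * 2 powr p2) * ((a1 / D1 powr (?N + \<alpha>)) * (a2 / D2 powr (?M + \<beta>)))^2" .
  show ?thesis
    using order_trans[OF Q1 ennreal_leI[OF fin]]
    unfolding g1_def g2_def E1_def E2_def p1_def p2_def q1_def q2_def a1_def a2_def D1_def D2_def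
    by simp
qed

lemma ratio_le:
  fixes l L d a e v V :: real
  assumes "0 < l" "l \<le> L" "0 \<le> d" "0 \<le> a" "0 \<le> e" "0 < V" "0 \<le> v"
  shows "l powr a * sqrt v / (L + d) powr e
     \<le> 2 powr e * (l powr (a/2) * L powr (a/2) / (l + L + d) powr e * sqrt v * sqrt V / sqrt V)"
proof -
  have la: "l powr a = l powr (a/2) * l powr (a/2)" by (simp add: powr_add[symmetric])
  have "l powr a \<le> l powr (a/2) * L powr (a/2)"
    unfolding la using assms by (intro mult_left_mono powr_mono2) auto
  moreover have "(l + L + d) powr e \<le> 2 powr e * (L + d) powr e"
  proof -
    have "(l + L + d) powr e \<le> (2 * (L + d)) powr e" using assms by (intro powr_mono2) auto
    also have "\<dots> = 2 powr e * (L + d) powr e" by (rule powr_mult)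
    finally show ?thesis .
  qed
  ultimately have "l powr a * sqrt v / (L + d) powr e \<le> l powr (a/2) * L powr (a/2) * sqrt v / ((l + L + d) powr e / 2 powr e)"
    using assms by (intro frac_le mult_right_mono) (auto simp: field_simps)
  also have "\<dots> = 2 powr e * (l powr (a/2) * L powr (a/2) / (l + L + d) powr e * sqrt v * sqrt V / sqrt V)"
    using assms by (simp add: field_simps)
  finally show ?thesis .
qed

lemma final_real:
  fixes C0 G R1 R2 :: real
  assumes "C0 \<ge> 0" "G \<ge> 1" "0 \<le> R1" "R1 \<le> G * R2"
  shows "C0 * R1^2 \<le> (sqrt C0 * G * R1)^2" "C0 * R1^2 \<le> (sqrt C0 * G * R2)^2"
proof -
  have "C0 * R1^2 \<le> C0 * (G * R1)^2"
    using assms by (intro mult_left_mono power_mono) (auto simp: mult_le_cancel_right1 mult_right_mono[of 1 G R1, simplified])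
  also have "\<dots> = (sqrt C0 * G * R1)^2" using assms by (simp add: power_mult_distrib)
  finally show "C0 * R1^2 \<le> (sqrt C0 * G * R1)^2" .
  have "C0 * R1^2 \<le> C0 * (G * R2)^2"
    using assms by (intro mult_left_mono power_mono) auto
  also have "\<dots> = (sqrt C0 * G * R2)^2" using assms by (simp add: power_mult_distrib)
  finally show "C0 * R1^2 \<le> (sqrt C0 * G * R2)^2" .
qed

lemma main_let:
  fixes K :: "('n::finite,'m::finite) kernel" and lam1 lam2 \<alpha> \<beta> C :: real
  assumes A: "assumption1 C \<alpha> \<beta> K"
    and lam: "lam1 > 2" "lam2 > 2"
    and ab: "0 < \<alpha>" "\<alpha> \<le> real CARD('n) * (lam1 - 2) / 2" "0 < \<beta>" "\<beta> \<le> real CARD('m) * (lam2 - 2) / 2"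
    and d1: "dside k1 < dside k2" and d2: "dside l1 < dside l2"
    and eta: "eta \<noteq> (\<lambda>_. False)" and zeta: "zeta \<noteq> (\<lambda>_. False)"
    and x1: "x1 \<in> dcube k2 j2" and t1: "dside k2 / 2 < t1"
    and x2: "x2 \<in> dcube l2 i2" and t2: "dside l2 / 2 < t2"
    and Cp: "Cp = sqrt C0 * G"
    and C0: "C0 = (C^2 * (2 powr (real CARD('n) + \<alpha>) * 2 powr (real CARD('m) + \<beta>))^2
        * (2 powr (2*(real CARD('n) + \<alpha>)) * (Dc CARD('n) (real CARD('n) * lam1) + Dc CARD('n) (2*(real CARD('n) + \<alpha>))))
        * (2 powr (2*(real CARD('m) + \<beta>)) * (Dc CARD('m) (real CARD('m) * lam2) + Dc CARD('m) (2*(real CARD('m) + \<beta>))))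
        * 2 powr (2*(real CARD('n) + \<alpha>)) * 2 powr (2*(real CARD('m) + \<beta>)))"
    and G: "G = (2 powr (real CARD('n) + \<alpha>) * 2 powr (real CARD('m) + \<beta>))"
  shows "(let f = (\<lambda>z. haar k1 j1 eta (fst z) * haar l1 i1 zeta (snd z));
           Q = lhs_sq K lam1 lam2 f x1 x2 t1 t2;
           I1 = dcube k1 j1; I2 = dcube k2 j2; J1 = dcube l1 i1; J2 = dcube l2 i2;
           n = real CARD('n); m = real CARD('m);
           lI1 = dside k1; lI2 = dside k2; lJ1 = dside l1; lJ2 = dside l2;
           vI1 = lI1 ^ CARD('n); vI2 = lI2 ^ CARD('n);
           vJ1 = lJ1 ^ CARD('m); vJ2 = lJ2 ^ CARD('m);
           DI = lI1 + lI2 + cdist I1 I2; DJ = lJ1 + lJ2 + cdist J1 J2;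
           AI = lI1 powr (\<alpha>/2) * lI2 powr (\<alpha>/2) / DI powr (n + \<alpha>) * sqrt vI1 * sqrt vI2;
           AJ = lJ1 powr (\<beta>/2) * lJ2 powr (\<beta>/2) / DJ powr (m + \<beta>) * sqrt vJ1 * sqrt vJ2;
           R1 = (lI1 powr \<alpha> * sqrt vI1 / (lI2 + cdist I1 I2) powr (n + \<alpha>))
              * (lJ1 powr \<beta> * sqrt vJ1 / (lJ2 + cdist J1 J2) powr (m + \<beta>));
           R2 = AI / sqrt vI2 * (AJ / sqrt vJ2)
       in Q \<le> ennreal ((Cp * R1)\<^sup>2) \<and> Q \<le> ennreal ((Cp * R2)\<^sup>2))"
proof -
  let ?N = "real CARD('n)" and ?M = "real CARD('m)"
  have MB: "lhs_sq K lam1 lam2 (\<lambda>z. haar k1 j1 eta (fst z) * haar l1 i1 zeta (snd z)) x1 x2 t1 t2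
     \<le> ennreal (C0 * ((dside k1 powr \<alpha> * sqrt (dside k1 ^ CARD('n)) / (dside k2 + cdist (dcube k1 j1) (dcube k2 j2)) powr (?N + \<alpha>))
       * (dside l1 powr \<beta> * sqrt (dside l1 ^ CARD('m)) / (dside l2 + cdist (dcube l1 i1) (dcube l2 i2)) powr (?M + \<beta>)))^2)"
    unfolding C0 by (rule main_bound[OF A lam ab d1 d2 eta zeta x1 t1 x2 t2 refl])
  have p1: "real CARD('n) * lam1 > ?N" "2*(?N + \<alpha>) > ?N" using lam ab by auto
  have p2: "real CARD('m) * lam2 > ?M" "2*(?M + \<beta>) > ?M" using lam ab by auto
  have C0p: "C0 \<ge> 0" unfolding C0
    using Dc_pos[OF p1(1)] Dc_pos[OF p1(2)] Dc_pos[OF p2(1)] Dc_pos[OF p2(2)] by simp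
  have g1: "1 \<le> 2 powr (?N + \<alpha>)" using ab by (intro ge_one_powr_ge_zero) auto
  have g2: "1 \<le> 2 powr (?M + \<beta>)" using ab by (intro ge_one_powr_ge_zero) auto
  have G1: "G \<ge> 1" unfolding G using mult_mono[OF g1 g2] by simp
  have cI: "0 \<le> cdist (dcube k1 j1) (dcube k2 j2)" using cdist_props(2)[OF ctr_in x1] .
  have cJ: "0 \<le> cdist (dcube l1 i1) (dcube l2 i2)" using cdist_props(2)[OF ctr_in x2] .
  have lI: "dside k1 \<le> dside k2" and lJ: "dside l1 \<le> dside l2" using d1 d2 by auto
  have X1: "dside k1 powr \<alpha> * sqrt (dside k1 ^ CARD('n)) / (dside k2 + cdist (dcube k1 j1) (dcube k2 j2)) powr (?N + \<alpha>)
     \<le> 2 powr (?N + \<alpha>) * (dside k1 powr (\<alpha>/2) * dside k2 powr (\<alpha>/2) / (dside k1 + dside k2 + cdist (dcube k1 j1) (dcube k2 j2)) powr (?N + \<alpha>) * sqrt (dside k1 ^ CARD('n)) * sqrt (dside k2 ^ CARD('n)) / sqrt (dside k2 ^ CARD('n)))"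
    by (rule ratio_le) (use dside_pos[of k1] dside_pos[of k2] lI cI ab in auto)
  have X2: "dside l1 powr \<beta> * sqrt (dside l1 ^ CARD('m)) / (dside l2 + cdist (dcube l1 i1) (dcube l2 i2)) powr (?M + \<beta>)
     \<le> 2 powr (?M + \<beta>) * (dside l1 powr (\<beta>/2) * dside l2 powr (\<beta>/2) / (dside l1 + dside l2 + cdist (dcube l1 i1) (dcube l2 i2)) powr (?M + \<beta>) * sqrt (dside l1 ^ CARD('m)) * sqrt (dside l2 ^ CARD('m)) / sqrt (dside l2 ^ CARD('m)))"
    by (rule ratio_le) (use dside_pos[of l1] dside_pos[of l2] lJ cJ ab in auto)
  have R1p: "0 \<le> (dside k1 powr \<alpha> * sqrt (dside k1 ^ CARD('n)) / (dside k2 + cdist (dcube k1 j1) (dcube k2 j2)) powr (?N + \<alpha>))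
       * (dside l1 powr \<beta> * sqrt (dside l1 ^ CARD('m)) / (dside l2 + cdist (dcube l1 i1) (dcube l2 i2)) powr (?M + \<beta>))"
    using dside_pos[of k1] dside_pos[of l1] by simp
  have RR: "(dside k1 powr \<alpha> * sqrt (dside k1 ^ CARD('n)) / (dside k2 + cdist (dcube k1 j1) (dcube k2 j2)) powr (?N + \<alpha>))
       * (dside l1 powr \<beta> * sqrt (dside l1 ^ CARD('m)) / (dside l2 + cdist (dcube l1 i1) (dcube l2 i2)) powr (?M + \<beta>))
     \<le> G * ((dside k1 powr (\<alpha>/2) * dside k2 powr (\<alpha>/2) / (dside k1 + dside k2 + cdist (dcube k1 j1) (dcube k2 j2)) powr (?N + \<alpha>) * sqrt (dside k1 ^ CARD('n)) * sqrt (dside k2 ^ CARD('n)) / sqrt (dside k2 ^ CARD('n)))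
         * (dside l1 powr (\<beta>/2) * dside l2 powr (\<beta>/2) / (dside l1 + dside l2 + cdist (dcube l1 i1) (dcube l2 i2)) powr (?M + \<beta>) * sqrt (dside l1 ^ CARD('m)) * sqrt (dside l2 ^ CARD('m)) / sqrt (dside l2 ^ CARD('m))))"
    using mult_mono[OF X1 X2] dside_pos[of k1] dside_pos[of l1] dside_pos[of k2] dside_pos[of l2] cI cJ
    unfolding G by (simp add: ac_simps)
  note F = final_real[OF C0p G1 R1p RR]
  show ?thesis unfolding Let_def Cp
    using order_trans[OF MB ennreal_leI[OF F(1)]] order_trans[OF MB ennreal_leI[OF F(2)]]
    by simp
qed

theorem mainTheorem3:
  fixes lam1 lam2 \<alpha> \<beta> C :: real
  assumes "lam1 > 2" and "lam2 > 2"
    and "0 < \<alpha>" and "\<alpha> \<le> real CARD('n::finite) * (lam1 - 2) / 2"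
    and "0 < \<beta>" and "\<beta> \<le> real CARD('m::finite) * (lam2 - 2) / 2"
  shows "\<exists>C'. \<forall>(K :: ('n, 'm) kernel). assumption1 C \<alpha> \<beta> K \<longrightarrow>
    (\<forall>k1 k2 (j1 :: 'n \<Rightarrow> int) j2 (eta :: 'n \<Rightarrow> bool)
       l1 l2 (i1 :: 'm \<Rightarrow> int) i2 (zeta :: 'm \<Rightarrow> bool) x1 x2 t1 t2.
      dside k1 < dside k2 \<longrightarrow> dside l1 < dside l2 \<longrightarrow>
      eta \<noteq> (\<lambda>_. False) \<longrightarrow> zeta \<noteq> (\<lambda>_. False) \<longrightarrow>
      x1 \<in> dcube k2 j2 \<longrightarrow> dside k2 / 2 < t1 \<longrightarrow> t1 < dside k2 \<longrightarrow>
      x2 \<in> dcube l2 i2 \<longrightarrow> dside l2 / 2 < t2 \<longrightarrow> t2 < dside l2 \<longrightarrow>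
      (let f = (\<lambda>z. haar k1 j1 eta (fst z) * haar l1 i1 zeta (snd z));
           Q = lhs_sq K lam1 lam2 f x1 x2 t1 t2;
           I1 = dcube k1 j1; I2 = dcube k2 j2; J1 = dcube l1 i1; J2 = dcube l2 i2;
           n = real CARD('n); m = real CARD('m);
           lI1 = dside k1; lI2 = dside k2; lJ1 = dside l1; lJ2 = dside l2;
           vI1 = lI1 ^ CARD('n); vI2 = lI2 ^ CARD('n);
           vJ1 = lJ1 ^ CARD('m); vJ2 = lJ2 ^ CARD('m);
           DI = lI1 + lI2 + cdist I1 I2; DJ = lJ1 + lJ2 + cdist J1 J2;
           AI = lI1 powr (\<alpha>/2) * lI2 powr (\<alpha>/2) / DI powr (n + \<alpha>) * sqrt vI1 * sqrt vI2;
           AJ = lJ1 powr (\<beta>/2) * lJ2 powr (\<beta>/2) / DJ powr (m + \<beta>) * sqrt vJ1 * sqrt vJ2;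
           R1 = (lI1 powr \<alpha> * sqrt vI1 / (lI2 + cdist I1 I2) powr (n + \<alpha>))
              * (lJ1 powr \<beta> * sqrt vJ1 / (lJ2 + cdist J1 J2) powr (m + \<beta>));
           R2 = AI / sqrt vI2 * (AJ / sqrt vJ2)
       in Q \<le> ennreal ((C' * R1)\<^sup>2) \<and> Q \<le> ennreal ((C' * R2)\<^sup>2)))"
  using assms by (intro exI[of _ "sqrt (C^2 * (2 powr (real CARD('n) + \<alpha>) * 2 powr (real CARD('m) + \<beta>))^2
        * (2 powr (2*(real CARD('n) + \<alpha>)) * (Dc CARD('n) (real CARD('n) * lam1) + Dc CARD('n) (2*(real CARD('n) + \<alpha>))))
        * (2 powr (2*(real CARD('m) + \<beta>)) * (Dc CARD('m) (real CARD('m) * lam2) + Dc CARD('m) (2*(real CARD('m) + \<beta>))))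
        * 2 powr (2*(real CARD('n) + \<alpha>)) * 2 powr (2*(real CARD('m) + \<beta>))) * (2 powr (real CARD('n) + \<alpha>) * 2 powr (real CARD('m) + \<beta>))"] allI impI main_let) (auto simp: le_less)

end
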